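(* For any $\alpha,\beta\in\{0,1\}^\infty$ with $\alpha\ne\beta$, $$\frac{1}{5^{|\alpha\wedge\beta|+1}}\le d_H(\mathcal K_\alpha,\mathcal K_\beta)<\frac{3\sqrt5}{5^{|\alpha\wedge\beta|+1}},\qquad d(\mathcal K_\alpha,\mathcal K_\beta)\ge\frac{1}{5^{|\alpha\wedge\beta|+1}}.$$
   Context: Let $I=[0,1]^3$. Let $\mathcal D_0=\{(i,2,2),(2,i,2),(2,2,i): i=0,1,2,3,4\}$ and $\mathcal D_1=\{d\in\{0,\ldots,4\}^3:\ \text{at least two coordinates of } d \text{ lie in }\{0,4\}\}$. For $i=0,1$ let $T_i(A)=\bigcup_{d\in\mathcal D_i}\frac{d+A}{5}$. For $\alpha=\alpha_1\alpha_2\ldots\in\{0,1\}^\infty$ let $\mathcal K_\alpha=\bigcap_{k\ge1}T_{\alpha_1}\circ\cdots\circ T_{\alpha_k}(I)$. $|\alpha\wedge\beta|$ denotes the length of the longest common initial segment of $\alpha$ and $\beta$. $d_H$ is the Hausdorff distance and $d(A,B)=\inf\{|a-b|:a\in A,b\in B\}$. *)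

theory Defs
  imports "HOL-Analysis.Analysis"
begin

definition D0 :: "(real^3) set" where
  "D0 = (\<Union>i\<in>{0..4::nat}. {vector [real i, 2, 2], vector [2, real i, 2], vector [2, 2, real i]})"

definition D1 :: "(real^3) set" where
  "D1 = {d. (\<forall>k. d$k \<in> {0,1,2,3,4}) \<and> (\<exists>k l. k \<noteq> l \<and> d$k \<in> {0,4} \<and> d$l \<in> {0,4})}"

definition Dig :: "nat \<Rightarrow> (real^3) set" where
  "Dig i = (if i = 0 then D0 else D1)"

definition Tmap :: "nat \<Rightarrow> (real^3) set \<Rightarrow> (real^3) set" where
  "Tmap i A = (\<Union>d\<in>Dig i. (\<lambda>x. (1/5) *\<^sub>R (d + x)) ` A)"

text \<open>Tcomp alpha k A = T_{alpha_1} o ... o T_{alpha_k} (A); alpha_j is alpha (j-1).\<close>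
fun Tcomp :: "(nat \<Rightarrow> nat) \<Rightarrow> nat \<Rightarrow> (real^3) set \<Rightarrow> (real^3) set" where
  "Tcomp \<alpha> 0 A = A"
| "Tcomp \<alpha> (Suc k) A = Tcomp \<alpha> k (Tmap (\<alpha> k) A)"

definition unitcube :: "(real^3) set" where
  "unitcube = cbox 0 1"

definition Kset :: "(nat \<Rightarrow> nat) \<Rightarrow> (real^3) set" where
  "Kset \<alpha> = (\<Inter>k\<in>{1..}. Tcomp \<alpha> k unitcube)"

definition common_prefix_len :: "(nat \<Rightarrow> nat) \<Rightarrow> (nat \<Rightarrow> nat) \<Rightarrow> nat" where
  "common_prefix_len \<alpha> \<beta> = (LEAST n. \<alpha> n \<noteq> \<beta> n)"

text \<open>Hausdorff distance (for nonempty bounded sets).\<close>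
definition hausdist :: "'a::metric_space set \<Rightarrow> 'a set \<Rightarrow> real" where
  "hausdist A B = max (SUP a\<in>A. infdist a B) (SUP b\<in>B. infdist b A)"

end

theory Submission
  imports Defs
begin


definition psum :: "(nat \<Rightarrow> real^3) \<Rightarrow> nat \<Rightarrow> real^3" where
  "psum e k = (\<Sum>j<k. (1/5)^(Suc j) *\<^sub>R e j)"

lemma psum_Suc: "psum e (Suc k) = psum e k + (1/5)^(Suc k) *\<^sub>R e k"
  by (simp add: psum_def)

lemma psum_cong: "(\<And>j. j < k \<Longrightarrow> e j = e' j) \<Longrightarrow> psum e k = psum e' k"
  unfolding psum_def by (rule sum.cong) auto

lemma Tcomp_rep:
  "Tcomp \<gamma> k A = {psum e k + (1/5)^k *\<^sub>R r | e r. (\<forall>j<k. e j \<in> Dig (\<gamma> j)) \<and> r \<in> A}"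
proof (induction k arbitrary: A)
  case 0
  then show ?case by (auto simp: psum_def)
next
  case (Suc k)
  show ?case
  proof (rule set_eqI, rule iffI)
    fix x assume "x \<in> Tcomp \<gamma> (Suc k) A"
    then have "x \<in> Tcomp \<gamma> k (Tmap (\<gamma> k) A)" by simp
    then obtain e r' where e: "\<forall>j<k. e j \<in> Dig (\<gamma> j)" and r': "r' \<in> Tmap (\<gamma> k) A"
      and x: "x = psum e k + (1/5)^k *\<^sub>R r'" using Suc.IH by blast
    from r' obtain d r where d: "d \<in> Dig (\<gamma> k)" and r: "r \<in> A" and r'eq: "r' = (1/5) *\<^sub>R (d + r)"
      unfolding Tmap_def by blast
    define e' where "e' = e(k := d)"
    have "psum e' k = psum e k" by (rule psum_cong) (simp add: e'_def)
    then have "psum e' (Suc k) = psum e k + (1/5)^(Suc k) *\<^sub>R d" by (simp add: psum_Suc e'_def)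
    then have "x = psum e' (Suc k) + (1/5)^(Suc k) *\<^sub>R r"
      by (simp add: x r'eq scaleR_add_right)
    moreover have "\<forall>j<Suc k. e' j \<in> Dig (\<gamma> j)" using e d by (auto simp: e'_def less_Suc_eq)
    ultimately show "x \<in> {psum e (Suc k) + (1/5)^(Suc k) *\<^sub>R r | e r. (\<forall>j<Suc k. e j \<in> Dig (\<gamma> j)) \<and> r \<in> A}"
      using r by blast
  next
    fix x assume "x \<in> {psum e (Suc k) + (1/5)^(Suc k) *\<^sub>R r | e r. (\<forall>j<Suc k. e j \<in> Dig (\<gamma> j)) \<and> r \<in> A}"
    then obtain e r where e: "\<forall>j<Suc k. e j \<in> Dig (\<gamma> j)" and r: "r \<in> A"
      and x: "x = psum e (Suc k) + (1/5)^(Suc k) *\<^sub>R r" by blast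
    have "(1/5) *\<^sub>R (e k + r) \<in> Tmap (\<gamma> k) A" using e r unfolding Tmap_def by auto
    moreover have "x = psum e k + (1/5)^k *\<^sub>R ((1/5) *\<^sub>R (e k + r))"
      by (simp add: x psum_Suc scaleR_add_right)
    moreover have "\<forall>j<k. e j \<in> Dig (\<gamma> j)" using e by auto
    ultimately have "x \<in> {psum e k + (1/5)^k *\<^sub>R r | e r. (\<forall>j<k. e j \<in> Dig (\<gamma> j)) \<and> r \<in> Tmap (\<gamma> k) A}"
      by blast
    then have "x \<in> Tcomp \<gamma> k (Tmap (\<gamma> k) A)" using Suc.IH by simp
    then show "x \<in> Tcomp \<gamma> (Suc k) A" by simp
  qed
qed

lemma dig_vals: "d \<in> Dig y \<Longrightarrow> d $ i \<in> {0,1,2,3,4}"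
proof -
  assume d: "d \<in> Dig y"
  show ?thesis
  proof (cases "y = 0")
    case True
    then have "d \<in> D0" using d by (simp add: Dig_def)
    then obtain n :: nat where n: "n \<le> 4" and
      "d = vector [real n, 2, 2] \<or> d = vector [2, real n, 2] \<or> d = vector [2, 2, real n]"
      unfolding D0_def by auto
    moreover have "real n \<in> {0,1,2,3,4}" using n by (auto simp: le_Suc_eq numeral_eq_Suc)
    ultimately show ?thesis using exhaust_3[of i] by auto
  next
    case False
    then show ?thesis using d by (simp add: Dig_def D1_def)
  qed
qed

lemma dig_bounds: "d \<in> Dig y \<Longrightarrow> 0 \<le> d $ i \<and> d $ i \<le> 4"
  using dig_vals[of d y i] by auto

lemma D0_form: "u \<in> D0 \<Longrightarrow> \<exists>m. \<forall>k. k \<noteq> m \<longrightarrow> u $ k = 2"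
proof -
  assume "u \<in> D0"
  then obtain n :: nat where
    "u = vector [real n, 2, 2] \<or> u = vector [2, real n, 2] \<or> u = vector [2, 2, real n]"
    unfolding D0_def by auto
  then show ?thesis
  proof (elim disjE)
    assume "u = vector [real n, 2, 2]"
    then show ?thesis by (intro exI[of _ 1] allI impI, metis exhaust_3 vector_3)
  next
    assume "u = vector [2, real n, 2]"
    then show ?thesis by (intro exI[of _ 2] allI impI, metis exhaust_3 vector_3)
  next
    assume "u = vector [2, 2, real n]"
    then show ?thesis by (intro exI[of _ 3] allI impI, metis exhaust_3 vector_3)
  qed
qed

lemma sep_digit: "u \<in> D0 \<Longrightarrow> v \<in> D1 \<Longrightarrow> \<exists>k. u $ k = 2 \<and> (v $ k = 0 \<or> v $ k = 4)"
proof -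
  assume u: "u \<in> D0" and v: "v \<in> D1"
  obtain m where m: "\<forall>k. k \<noteq> m \<longrightarrow> u $ k = 2" using D0_form[OF u] by blast
  obtain k l where kl: "k \<noteq> l" "v $ k \<in> {0,4}" "v $ l \<in> {0,4}" using v unfolding D1_def by blast
  show ?thesis
  proof (cases "k = m")
    case True
    then show ?thesis using m kl by (intro exI[of _ l]) auto
  next
    case False
    then show ?thesis using m kl by (intro exI[of _ k]) auto
  qed
qed

lemma close_digit:
  assumes "\<forall>k. 0 \<le> u $ k \<and> u $ k \<le> 4"
  shows "\<exists>v\<in>Dig y. \<forall>k. \<bar>u $ k - v $ k\<bar> \<le> 2"
proof (cases "y = 0")
  case True
  have "vector [real 2, 2, 2] \<in> D0" unfolding D0_def by (intro UN_I[of "2::nat"]) auto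
  then have "(vector [2, 2, 2] :: real^3) \<in> Dig y" using True by (simp add: Dig_def)
  moreover have "\<forall>k. \<bar>u $ k - (vector [2, 2, 2] :: real^3) $ k\<bar> \<le> 2"
  proof
    fix k :: 3
    have "(vector [2, 2, 2] :: real^3) $ k = 2" using exhaust_3[of k] by auto
    then show "\<bar>u $ k - (vector [2, 2, 2] :: real^3) $ k\<bar> \<le> 2" using assms[rule_format, of k] by auto
  qed
  ultimately show ?thesis by blast
next
  case False
  define v :: "real^3" where "v = (\<chi> k. if u $ k \<le> 2 then 0 else 4)"
  have "(1::3) \<noteq> 2" by simp
  moreover have "\<forall>k. v $ k \<in> {0,4}" by (simp add: v_def)
  ultimately have "v \<in> D1" unfolding D1_def by blast
  then have "v \<in> Dig y" using False by (simp add: Dig_def)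
  moreover have "\<forall>k. \<bar>u $ k - v $ k\<bar> \<le> 2" using assms by (auto simp: v_def)
  ultimately show ?thesis by blast
qed

definition pt :: "(nat \<Rightarrow> real^3) \<Rightarrow> real^3" where
  "pt E = (\<Sum>j. (1/5)^(Suc j) *\<^sub>R E j)"

lemma geom4: "(\<lambda>j. (1/5::real)^(Suc j) * 4) sums 1"
proof -
  have "(\<lambda>j. (1/5::real)^j) sums (1 / (1 - 1/5))" by (rule geometric_sums) simp
  then have "(\<lambda>j. (4/5) * (1/5::real)^j) sums ((4/5) * (1 / (1 - 1/5)))" by (rule sums_mult)
  then show ?thesis by (simp add: mult_ac)
qed

lemma pt_sums:
  assumes b: "\<And>j i. 0 \<le> E j $ i \<and> E j $ i \<le> 4"
  shows "(\<lambda>j. (1/5)^(Suc j) *\<^sub>R E j) sums pt E"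
proof -
  have "summable (\<lambda>j. (1/5)^(Suc j) *\<^sub>R E j)"
  proof (rule summable_comparison_test)
    show "summable (\<lambda>j. (1/5::real)^(Suc j) * 4 * 3)"
      using geom4 by (intro summable_mult2) (auto simp: sums_iff)
    show "\<exists>N. \<forall>n\<ge>N. norm ((1/5)^(Suc n) *\<^sub>R E n) \<le> (1/5::real)^(Suc n) * 4 * 3"
    proof (intro exI allI impI)
      fix n :: nat
      have "norm (E n) \<le> (\<Sum>i\<in>UNIV. \<bar>E n $ i\<bar>)" by (rule norm_le_l1_cart)
      also have "\<dots> \<le> (\<Sum>i\<in>(UNIV::3 set). 4)" using b by (intro sum_mono) (simp add: abs_le_iff) 
      also have "\<dots> = 4 * 3" by simp
      finally have "norm (E n) \<le> 4 * 3" .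
      then show "norm ((1/5)^(Suc n) *\<^sub>R E n) \<le> (1/5::real)^(Suc n) * 4 * 3"
        by (simp add: mult.assoc mult_left_mono)
    qed
  qed
  then show ?thesis by (simp add: pt_def summable_sums)
qed

lemma pt_cube:
  assumes b: "\<And>j i. 0 \<le> E j $ i \<and> E j $ i \<le> 4"
  shows "pt E \<in> unitcube"
proof -
  have s: "(\<lambda>j. (1/5)^(Suc j) *\<^sub>R E j) sums pt E" by (rule pt_sums[OF b])
  have "0 \<le> pt E $ i \<and> pt E $ i \<le> 1" for i
  proof -
    have si: "(\<lambda>j. ((1/5)^(Suc j) *\<^sub>R E j) $ i) sums (pt E $ i)"
      using bounded_linear.sums[OF bounded_linear_vec_nth s] .
    have "0 \<le> pt E $ i"
    proof (rule sums_le[OF _ sums_zero si])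
      fix n show "0 \<le> ((1/5)^(Suc n) *\<^sub>R E n) $ i" using b[of n i] by simp
    qed
    moreover have "pt E $ i \<le> 1"
    proof (rule sums_le[OF _ si geom4])
      fix n show "((1/5)^(Suc n) *\<^sub>R E n) $ i \<le> (1/5)^(Suc n) * 4" using b[of n i] by simp
    qed
    ultimately show ?thesis ..
  qed
  then show ?thesis unfolding unitcube_def mem_box_cart by simp
qed

lemma pt_shift:
  assumes b: "\<And>j i. 0 \<le> E j $ i \<and> E j $ i \<le> 4"
  shows "pt E = psum E k + (1/5)^k *\<^sub>R pt (\<lambda>j. E (j + k))"
proof -
  have s: "(\<lambda>j. (1/5)^(Suc j) *\<^sub>R E j) sums pt E" by (rule pt_sums[OF b])
  have s2: "(\<lambda>j. (1/5)^(Suc j) *\<^sub>R E (j + k)) sums pt (\<lambda>j. E (j + k))"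
    by (rule pt_sums) (rule b)
  have "(\<lambda>j. (1/5::real)^k *\<^sub>R ((1/5)^(Suc j) *\<^sub>R E (j + k))) sums ((1/5)^k *\<^sub>R pt (\<lambda>j. E (j + k)))"
    by (rule sums_scaleR_right[OF s2])
  moreover have "(\<lambda>j. (1/5::real)^k *\<^sub>R ((1/5)^(Suc j) *\<^sub>R E (j + k))) = (\<lambda>j. (1/5)^(Suc (j + k)) *\<^sub>R E (j + k))"
    by (simp add: power_add mult_ac)
  ultimately have "(\<lambda>j. (1/5)^(Suc (j + k)) *\<^sub>R E (j + k)) sums ((1/5)^k *\<^sub>R pt (\<lambda>j. E (j + k)))" by simp
  then have "(\<lambda>j. (1/5)^(Suc j) *\<^sub>R E j) sums ((1/5)^k *\<^sub>R pt (\<lambda>j. E (j + k)) + psum E k)"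
    unfolding psum_def by (subst sums_iff_shift[symmetric]) simp
  then have "pt E = (1/5)^k *\<^sub>R pt (\<lambda>j. E (j + k)) + psum E k" using s sums_unique2 by blast
  then show ?thesis by (simp add: add.commute)
qed

lemma pt_in_K:
  assumes E: "\<And>j. E j \<in> Dig (\<gamma> j)"
  shows "pt E \<in> Kset \<gamma>"
proof -
  have b: "\<And>j i. 0 \<le> E j $ i \<and> E j $ i \<le> 4" using dig_bounds[OF E] by blast
  have "pt E \<in> Tcomp \<gamma> k unitcube" for k
  proof -
    have c: "pt (\<lambda>j. E (j + k)) \<in> unitcube" by (rule pt_cube) (rule b)
    have eq: "pt E = psum E k + (1/5)^k *\<^sub>R pt (\<lambda>j. E (j + k))" by (rule pt_shift) (rule b)
    have "\<forall>j<k. E j \<in> Dig (\<gamma> j)" using E by blast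
    then have "pt E \<in> {psum e k + (1/5)^k *\<^sub>R r | e r. (\<forall>j<k. e j \<in> Dig (\<gamma> j)) \<and> r \<in> unitcube}"
      using c eq by blast
    then show ?thesis by (simp only: Tcomp_rep)
  qed
  then show ?thesis unfolding Kset_def by blast
qed



definition dflt :: "nat \<Rightarrow> real^3" where
  "dflt y = (if y = 0 then vector [2, 2, 2] else 0)"

lemma dflt_in: "dflt y \<in> Dig y"
proof (cases "y = 0")
  case True
  have "vector [real 2, 2, 2] \<in> D0" unfolding D0_def by (intro UN_I[of "2::nat"]) auto
  then show ?thesis using True by (simp add: Dig_def dflt_def)
next
  case False
  have "(1::3) \<noteq> 2" by simp
  moreover have "\<forall>k. (0::real^3) $ k \<in> {0,4}" by simp
  ultimately have "(0::real^3) \<in> D1" unfolding D1_def by blast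
  then show ?thesis using False by (simp add: Dig_def dflt_def)
qed

lemma K_nonempty: "Kset \<gamma> \<noteq> {}"
  using pt_in_K[of "\<lambda>j. dflt (\<gamma> j)" \<gamma>] dflt_in by blast

lemma int_prefix:
  assumes "\<forall>j<n. \<forall>i. e j $ i \<in> \<int>"
  shows "5^n * (psum e n) $ i \<in> \<int>"
proof -
  have "5^n * (psum e n) $ i = (\<Sum>j<n. 5^n * ((1/5)^(Suc j) * e j $ i))"
    by (simp add: psum_def sum_distrib_left)
  also have "\<dots> = (\<Sum>j<n. 5^(n - Suc j) * e j $ i)"
  proof (rule sum.cong)
    fix j assume "j \<in> {..<n}"
    then have "n = Suc j + (n - Suc j)" by simp
    then have "(5::real)^n = 5^(Suc j) * 5^(n - Suc j)" by (metis power_add)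
    then show "5^n * ((1/5)^(Suc j) * e j $ i) = 5^(n - Suc j) * e j $ i"
      by (simp add: power_one_over field_simps)
  qed simp
  also have "\<dots> \<in> \<int>" using assms by (intro Ints_sum Ints_mult) auto
  finally show ?thesis .
qed

lemma scaled_coord:
  assumes "x = psum e (Suc n) + (1/5)^(Suc n) *\<^sub>R r"
  shows "5^(Suc n) * x $ k = 5 * (5^n * (psum e n) $ k) + e n $ k + r $ k"
proof -
  have "x $ k = (psum e n) $ k + (1/5)^(Suc n) * (e n $ k + r $ k)"
    using assms by (simp add: psum_Suc algebra_simps)
  then show ?thesis by (simp add: power_one_over field_simps)
qed

lemma cube_coord: "r \<in> unitcube \<Longrightarrow> 0 \<le> r $ i \<and> r $ i \<le> 1"
  by (simp add: unitcube_def mem_box_cart)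

lemma dig_int: "d \<in> Dig y \<Longrightarrow> d $ i \<in> \<int>"
proof -
  assume "d \<in> Dig y"
  then have "d $ i \<in> {0,1,2,3,4}" by (rule dig_vals)
  then show ?thesis by (elim insertE) auto
qed

lemma int_gap:
  fixes z :: int and \<delta> t :: real
  assumes "\<delta> = 2 \<or> \<delta> = -2" "\<bar>t\<bar> \<le> 1"
  shows "1 \<le> \<bar>5 * real_of_int z + \<delta> + t\<bar>"
proof -
  have "z = 0 \<or> z \<ge> 1 \<or> z \<le> -1" by linarith
  then have "real_of_int z = 0 \<or> real_of_int z \<ge> 1 \<or> real_of_int z \<le> -1" by auto
  then show ?thesis using assms by (elim disjE; smt (verit))
qed

lemma K_sub: "x \<in> Kset \<gamma> \<Longrightarrow> x \<in> Tcomp \<gamma> (Suc n) unitcube"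
proof -
  assume "x \<in> Kset \<gamma>"
  then have h: "\<forall>k\<in>{1..}. x \<in> Tcomp \<gamma> k unitcube" by (simp only: Kset_def INT_iff)
  have "Suc n \<in> {1..}" by simp
  with h show ?thesis by (simp del: Tcomp.simps)
qed

lemma Tcomp_obtain:
  assumes "x \<in> Tcomp \<gamma> k A"
  obtains e r where "\<forall>j<k. e j \<in> Dig (\<gamma> j)" "r \<in> A" "x = psum e k + (1/5)^k *\<^sub>R r"
proof -
  from assms have "x \<in> {psum e k + (1/5)^k *\<^sub>R r | e r. (\<forall>j<k. e j \<in> Dig (\<gamma> j)) \<and> r \<in> A}"
    by (simp only: Tcomp_rep)
  then show ?thesis using that by blast
qed

lemma sepK:
  assumes ab: "\<alpha> n \<in> {0,1}" "\<beta> n \<in> {0,1}" "\<alpha> n \<noteq> \<beta> n"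
    and a: "a \<in> Kset \<alpha>" and b: "b \<in> Kset \<beta>"
  shows "(1/5)^(Suc n) \<le> dist a b"
proof -
  obtain e r where e: "\<forall>j<Suc n. e j \<in> Dig (\<alpha> j)" and r: "r \<in> unitcube"
    and aeq: "a = psum e (Suc n) + (1/5)^(Suc n) *\<^sub>R r" using Tcomp_obtain[OF K_sub[OF a]] by blast
  obtain e' r' where e': "\<forall>j<Suc n. e' j \<in> Dig (\<beta> j)" and r': "r' \<in> unitcube"
    and beq: "b = psum e' (Suc n) + (1/5)^(Suc n) *\<^sub>R r'" using Tcomp_obtain[OF K_sub[OF b]] by blast
  have en: "e n \<in> Dig (\<alpha> n)" "e' n \<in> Dig (\<beta> n)" using e e' by auto
  have "\<exists>k. e n $ k - e' n $ k = 2 \<or> e n $ k - e' n $ k = -2"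
  proof (cases "\<alpha> n = 0")
    case True
    then have "\<beta> n \<noteq> 0" using ab by auto
    then have "e n \<in> D0" "e' n \<in> D1" using en True by (auto simp: Dig_def)
    then obtain k where "e n $ k = 2" "e' n $ k = 0 \<or> e' n $ k = 4" using sep_digit by blast
    then have "e n $ k - e' n $ k = 2 \<or> e n $ k - e' n $ k = -2" by auto
    then show ?thesis by blast
  next
    case False
    then have "\<beta> n = 0" using ab by auto
    then have "e' n \<in> D0" "e n \<in> D1" using en False by (auto simp: Dig_def)
    then obtain k where "e' n $ k = 2" "e n $ k = 0 \<or> e n $ k = 4" using sep_digit by blast
    then have "e n $ k - e' n $ k = 2 \<or> e n $ k - e' n $ k = -2" by auto
    then show ?thesis by blast
  qed
  then obtain k where k: "e n $ k - e' n $ k = 2 \<or> e n $ k - e' n $ k = -2" by blast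
  have "\<forall>j<n. \<forall>i. e j $ i \<in> \<int>" using e dig_int by (meson less_SucI)
  then have ie: "5^n * (psum e n) $ k \<in> \<int>" by (rule int_prefix)
  have "\<forall>j<n. \<forall>i. e' j $ i \<in> \<int>" using e' dig_int by (meson less_SucI)
  then have ie': "5^n * (psum e' n) $ k \<in> \<int>" by (rule int_prefix)
  obtain z where z: "5^n * (psum e n) $ k - 5^n * (psum e' n) $ k = real_of_int z"
    using Ints_diff[OF ie ie'] by (auto elim: Ints_cases)
  have rb: "\<bar>r $ k - r' $ k\<bar> \<le> 1" using cube_coord[OF r, of k] cube_coord[OF r', of k] by linarith
  have s1: "5^(Suc n) * a $ k = 5 * (5^n * (psum e n) $ k) + e n $ k + r $ k" by (rule scaled_coord[OF aeq])
  have s2: "5^(Suc n) * b $ k = 5 * (5^n * (psum e' n) $ k) + e' n $ k + r' $ k" by (rule scaled_coord[OF beq])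
  have "5^(Suc n) * (a $ k - b $ k) = 5 * real_of_int z + (e n $ k - e' n $ k) + (r $ k - r' $ k)"
    using s1 s2 z by (simp add: right_diff_distrib)
  then have "1 \<le> \<bar>5^(Suc n) * (a $ k - b $ k)\<bar>" using int_gap[OF k rb] by simp
  then have "1 \<le> 5^(Suc n) * \<bar>a $ k - b $ k\<bar>" by (simp add: abs_mult)
  then have "(1/5)^(Suc n) \<le> \<bar>a $ k - b $ k\<bar>"
    by (simp add: power_one_over field_simps)
  also have "\<dots> \<le> dist a b" unfolding dist_norm
    by (metis component_le_norm_cart vector_minus_component)
  finally show ?thesis .
qed



lemma norm_bound3:
  fixes x :: "real^3"
  assumes "\<And>i. \<bar>x $ i\<bar> \<le> 3"
  shows "norm x \<le> sqrt 27"
proof -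
  have "(\<Sum>i\<in>(UNIV::3 set). (norm (x $ i))\<^sup>2) \<le> (\<Sum>i\<in>(UNIV::3 set). 9)"
  proof (rule sum_mono)
    fix i :: 3
    have "\<bar>x $ i\<bar>\<^sup>2 \<le> 3\<^sup>2" using assms[of i] by (intro power_mono) auto
    then show "(norm (x $ i))\<^sup>2 \<le> 9" by simp
  qed
  then have "(\<Sum>i\<in>(UNIV::3 set). (norm (x $ i))\<^sup>2) \<le> 27" by simp
  then show ?thesis unfolding norm_vec_def L2_set_def by (rule real_sqrt_le_mono)
qed

lemma approxK:
  assumes pre: "\<forall>j<n. \<alpha> j = \<beta> j" and a: "a \<in> Kset \<alpha>"
  shows "\<exists>b\<in>Kset \<beta>. dist a b \<le> sqrt 27 * (1/5)^(Suc n)"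
proof -
  obtain e r where e: "\<forall>j<Suc n. e j \<in> Dig (\<alpha> j)" and r: "r \<in> unitcube"
    and aeq: "a = psum e (Suc n) + (1/5)^(Suc n) *\<^sub>R r" using Tcomp_obtain[OF K_sub[OF a]] by blast
  have "\<forall>k. 0 \<le> e n $ k \<and> e n $ k \<le> 4" using e dig_bounds by blast
  then obtain v where v: "v \<in> Dig (\<beta> n)" and vc: "\<forall>k. \<bar>e n $ k - v $ k\<bar> \<le> 2"
    using close_digit by blast
  define E where "E j = (if j < n then e j else if j = n then v else dflt (\<beta> j))" for j
  have E: "E j \<in> Dig (\<beta> j)" for j
    using e pre v dflt_in by (auto simp: E_def) (metis less_SucI)
  have Eb: "\<And>j i. 0 \<le> E j $ i \<and> E j $ i \<le> 4" using dig_bounds[OF E] by blast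
  define b where "b = pt E"
  have bK: "b \<in> Kset \<beta>" unfolding b_def by (rule pt_in_K[OF E])
  define s where "s = pt (\<lambda>j. E (j + Suc n))"
  have s: "s \<in> unitcube" unfolding s_def by (rule pt_cube) (rule Eb)
  have beq: "b = psum E (Suc n) + (1/5)^(Suc n) *\<^sub>R s" unfolding b_def s_def by (rule pt_shift) (rule Eb)
  have "psum E n = psum e n" by (rule psum_cong) (simp add: E_def)
  then have pE: "psum E (Suc n) = psum e n + (1/5)^(Suc n) *\<^sub>R v" by (simp add: psum_Suc E_def)
  have pe: "psum e (Suc n) = psum e n + (1/5)^(Suc n) *\<^sub>R e n" by (simp add: psum_Suc)
  have "a - b = (1/5)^(Suc n) *\<^sub>R ((e n - v) + (r - s))"
    unfolding aeq beq pE pe by (simp add: algebra_simps)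
  then have "dist a b = (1/5)^(Suc n) * norm ((e n - v) + (r - s))" by (simp add: dist_norm)
  also have "norm ((e n - v) + (r - s)) \<le> sqrt 27"
  proof (rule norm_bound3)
    fix i
    have "\<bar>r $ i - s $ i\<bar> \<le> 1" using cube_coord[OF r, of i] cube_coord[OF s, of i] by linarith
    then show "\<bar>((e n - v) + (r - s)) $ i\<bar> \<le> 3" using vc[rule_format, of i] by simp
  qed
  then have "(1/5)^(Suc n) * norm ((e n - v) + (r - s)) \<le> (1/5)^(Suc n) * sqrt 27"
    by (rule mult_left_mono) simp
  finally show ?thesis using bK by (auto simp: mult.commute)
qed



lemma sqrt_ineq: "sqrt 27 < 3 * sqrt (5::real)"
proof -
  have "3 * sqrt (5::real) = sqrt (3^2) * sqrt 5" by (simp only: real_sqrt_abs)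
  also have "\<dots> = sqrt (3^2 * 5)" by (rule real_sqrt_mult[symmetric])
  also have "\<dots> = sqrt 45" by simp
  finally show ?thesis by simp
qed

theorem corollary1:
  fixes \<alpha> \<beta> :: "nat \<Rightarrow> nat"
  assumes "\<forall>n. \<alpha> n \<in> {0,1}" and "\<forall>n. \<beta> n \<in> {0,1}" and "\<alpha> \<noteq> \<beta>"
  shows "1 / 5 ^ (common_prefix_len \<alpha> \<beta> + 1) \<le> hausdist (Kset \<alpha>) (Kset \<beta>)
     \<and> hausdist (Kset \<alpha>) (Kset \<beta>) < 3 * sqrt 5 / 5 ^ (common_prefix_len \<alpha> \<beta> + 1)
     \<and> setdist (Kset \<alpha>) (Kset \<beta>) \<ge> 1 / 5 ^ (common_prefix_len \<alpha> \<beta> + 1)"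
proof -
  define n where "n = common_prefix_len \<alpha> \<beta>"
  have ex: "\<exists>m. \<alpha> m \<noteq> \<beta> m" using assms(3) by (auto simp: fun_eq_iff)
  have neq: "\<alpha> n \<noteq> \<beta> n" unfolding n_def common_prefix_len_def by (rule LeastI_ex[OF ex])
  have pre: "\<forall>j<n. \<alpha> j = \<beta> j" unfolding n_def common_prefix_len_def using not_less_Least by blast
  have pre': "\<forall>j<n. \<beta> j = \<alpha> j" using pre by simp
  define c :: real where "c = (1/5)^(Suc n)"
  have c_eq: "1 / 5 ^ (n + 1) = c" by (simp add: c_def power_one_over)
  have c3: "3 * sqrt 5 / 5 ^ (n + 1) = 3 * sqrt 5 * c" by (simp add: c_def power_one_over)
  have cpos: "0 < c" by (simp add: c_def)
  have KA: "Kset \<alpha> \<noteq> {}" and KB: "Kset \<beta> \<noteq> {}" by (rule K_nonempty)+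
  have sep: "c \<le> dist a b" if "a \<in> Kset \<alpha>" "b \<in> Kset \<beta>" for a b
    unfolding c_def using sepK[of \<alpha> n \<beta> a b] assms(1,2) neq that by blast
  have up1: "infdist a (Kset \<beta>) \<le> sqrt 27 * c" if aK: "a \<in> Kset \<alpha>" for a
  proof -
    obtain b where "b \<in> Kset \<beta>" "dist a b \<le> sqrt 27 * c" using approxK[OF pre aK] c_def by blast
    then show ?thesis by (rule infdist_le2)
  qed
  have up2: "infdist b (Kset \<alpha>) \<le> sqrt 27 * c" if bK: "b \<in> Kset \<beta>" for b
  proof -
    obtain a where "a \<in> Kset \<alpha>" "dist b a \<le> sqrt 27 * c" using approxK[OF pre' bK] c_def by blast
    then show ?thesis by (rule infdist_le2)
  qed
  have S1: "(SUP a\<in>Kset \<alpha>. infdist a (Kset \<beta>)) \<le> sqrt 27 * c"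
    using KA up1 by (intro cSUP_least) auto
  have S2: "(SUP b\<in>Kset \<beta>. infdist b (Kset \<alpha>)) \<le> sqrt 27 * c"
    using KB up2 by (intro cSUP_least) auto
  have H: "hausdist (Kset \<alpha>) (Kset \<beta>) \<le> sqrt 27 * c"
    unfolding hausdist_def using S1 S2 by simp
  have "sqrt 27 * c < 3 * sqrt 5 * c" using sqrt_ineq cpos by simp
  with H have upper: "hausdist (Kset \<alpha>) (Kset \<beta>) < 3 * sqrt 5 * c" by linarith
  obtain a0 where a0: "a0 \<in> Kset \<alpha>" using KA by blast
  have "c \<le> infdist a0 (Kset \<beta>)"
    unfolding infdist_notempty[OF KB] using KB sep[OF a0] by (intro cINF_greatest) auto
  also have "\<dots> \<le> (SUP a\<in>Kset \<alpha>. infdist a (Kset \<beta>))"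
    using a0 up1 by (intro cSUP_upper bdd_aboveI2[where M = "sqrt 27 * c"]) auto
  also have "\<dots> \<le> hausdist (Kset \<alpha>) (Kset \<beta>)" unfolding hausdist_def by simp
  finally have lower: "c \<le> hausdist (Kset \<alpha>) (Kset \<beta>)" .
  have sd: "c \<le> setdist (Kset \<alpha>) (Kset \<beta>)"
    using KA KB sep by (intro le_setdistI) auto
  show ?thesis unfolding n_def[symmetric] c_eq c3 using lower upper sd by blast
qed

end
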